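(* Let $\mathcal R$ be the compositum of all real quadratic integer rings $\mathcal O_{\mathbb{Q}(\sqrt{d})}$ ($d>1$ squarefree). Let $A=(a_{uv})$ be an $n\times n$ symmetric $\mathcal R$-matrix, and suppose that for some index $v$ one has $d_v:=\sum_{u=1}^n a_{uv}^2>4$. Then $A\notin\mathfrak S'_n$.
   Context: For a symmetric $\mathcal R$-matrix $A$, let $L_A$ denote the smallest normal extension of $\mathbb{Q}$ containing all entries of $A$. $\mathfrak S'_n$ denotes the set of $n\times n$ symmetric $\mathcal R$-matrices $A$ such that for every $\sigma\in\operatorname{Gal}(L_A/\mathbb{Q})$, all eigenvalues of $\sigma(A)$ (with $\sigma$ applied entrywise) lie in the interval $[-2,2]$. *)

theory Defs
  imports "HOL-Analysis.Analysis" "HOL-Computational_Algebra.Polynomial"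
    "HOL-Computational_Algebra.Squarefree"
begin

definition quad_int_ring :: "nat \<Rightarrow> real set" where
  "quad_int_ring d = {x. (\<exists>a\<in>\<rat>. \<exists>b\<in>\<rat>. x = a + b * sqrt (real d)) \<and> algebraic_int x}"

definition R_ring :: "real set" where
  "R_ring = \<Inter> {S. 0 \<in> S \<and> 1 \<in> S \<and> (\<forall>x\<in>S. \<forall>y\<in>S. x + y \<in> S \<and> x - y \<in> S \<and> x * y \<in> S)
      \<and> (\<forall>d::nat. d > 1 \<and> squarefree d \<longrightarrow> quad_int_ring d \<subseteq> S)}"

definition is_subfield :: "complex set \<Rightarrow> bool" where
  "is_subfield K \<longleftrightarrow> 0 \<in> K \<and> 1 \<in> K \<and>
     (\<forall>x\<in>K. \<forall>y\<in>K. x + y \<in> K \<and> x - y \<in> K \<and> x * y \<in> K) \<and> (\<forall>x\<in>K. inverse x \<in> K)"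

text \<open>z is a Q-conjugate of x: z is a root of every rational polynomial vanishing at x
  (for algebraic x: z is a root of the minimal polynomial of x).\<close>
definition Q_conjugate :: "complex \<Rightarrow> complex \<Rightarrow> bool" where
  "Q_conjugate x z \<longleftrightarrow>
     (\<forall>p :: rat poly. poly (map_poly of_rat p) x = 0 \<longrightarrow> poly (map_poly of_rat p) z = 0)"

definition normal_over_Q :: "complex set \<Rightarrow> bool" where
  "normal_over_Q K \<longleftrightarrow> is_subfield K \<and>
     (\<forall>x\<in>K. algebraic x \<and> (\<forall>z. Q_conjugate x z \<longrightarrow> z \<in> K))"

definition L_field :: "real^'n^'n \<Rightarrow> complex set" where
  "L_field A = \<Inter> {K. normal_over_Q K \<and> (\<forall>i j. complex_of_real (A $ i $ j) \<in> K)}"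

text \<open>Gal(L/Q): field automorphisms of L (they automatically fix Q).\<close>
definition Gal :: "complex set \<Rightarrow> (complex \<Rightarrow> complex) set" where
  "Gal L = {\<sigma>. bij_betw \<sigma> L L \<and> \<sigma> 1 = 1 \<and>
     (\<forall>x\<in>L. \<forall>y\<in>L. \<sigma> (x + y) = \<sigma> x + \<sigma> y \<and> \<sigma> (x * y) = \<sigma> x * \<sigma> y)}"

definition apply_aut :: "(complex \<Rightarrow> complex) \<Rightarrow> real^'n^'n \<Rightarrow> complex^'n^'n" where
  "apply_aut \<sigma> A = (\<chi> i j. \<sigma> (complex_of_real (A $ i $ j)))"

definition is_eigenvalue :: "complex^'n^'n \<Rightarrow> complex \<Rightarrow> bool" where
  "is_eigenvalue M c \<longleftrightarrow> (\<exists>x. x \<noteq> 0 \<and> M *v x = c *s x)"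

definition is_R_matrix :: "real^'n^'n \<Rightarrow> bool" where
  "is_R_matrix A \<longleftrightarrow> (\<forall>i j. A $ i $ j \<in> R_ring)"

definition S'_set :: "(real^'n^'n) set" where
  "S'_set = {A. is_R_matrix A \<and> transpose A = A \<and>
     (\<forall>\<sigma>\<in>Gal (L_field A). \<forall>c. is_eigenvalue (apply_aut \<sigma> A) c \<longrightarrow>
        c \<in> complex_of_real ` {-2..2})}"

end

theory Submission
  imports Defs
begin

lemma sym_inner:
  fixes A :: "real^'n^'n"
  assumes "transpose A = A"
  shows "(A *v x) \<bullet> y = x \<bullet> (A *v y)"
proof -
  have "x \<bullet> (A *v y) = (x v* A) \<bullet> y" by (simp add: dot_lmul_matrix)
  also have "x v* A = transpose A *v x" by (simp add: transpose_matrix_vector)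
  finally show ?thesis using assms by simp
qed

lemma quad_lemma:
  fixes b c :: real
  assumes "c \<le> 0" and "\<And>t. 2*t*b + t^2*c \<le> 0"
  shows "b = 0"
proof (rule ccontr)
  assume nb: "b \<noteq> 0"
  define t where "t = b/(1-c)"
  have pos: "1 - c > 0" using assms(1) by simp
  have tt: "(1-c) * t = b" using pos unfolding t_def by simp
  have "(1-c)^2 * (2*t*b + t^2*c) = 2*((1-c)*t)*b*(1-c) + ((1-c)*t)^2*c"
    by (simp add: power2_eq_square algebra_simps)
  also have "\<dots> = b^2*(2 - c)" unfolding tt by (simp add: power2_eq_square algebra_simps)
  finally have e: "(1-c)^2 * (2*t*b + t^2*c) = b^2*(2 - c)" .
  have "b^2*(2 - c) > 0" using nb assms(1) by simp
  hence "2*t*b + t^2*c > 0" using e pos by (metis mult_le_0_iff not_le zero_le_power2)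
  thus False using assms(2)[of t] by simp
qed

lemma big_eig:
  fixes A :: "real^'n^'n" and v :: 'n
  assumes sym: "transpose A = A"
    and big: "(\<Sum>u\<in>UNIV. (A $ u $ v)^2) > 4"
  shows "\<exists>w l. w \<noteq> 0 \<and> A *v w = l *\<^sub>R w \<and> \<bar>l\<bar> > 2"
proof -
  let ?f = "\<lambda>x::real^'n. (A *v x) \<bullet> (A *v x)"
  have "continuous_on (sphere 0 1) ?f"
    by (intro continuous_intros matrix_vector_mult_linear_continuous_on)
  moreover have "axis v 1 \<in> sphere (0::real^'n) 1" by (simp add: norm_axis_1)
  ultimately obtain x0 where x0: "x0 \<in> sphere 0 1" and mx: "\<And>y. y \<in> sphere 0 1 \<Longrightarrow> ?f y \<le> ?f x0"
    using continuous_attains_sup[OF compact_sphere, of 0 1 ?f] by blast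
  define M where "M = ?f x0"
  have col: "A *v axis v 1 = (\<chi> u. A $ u $ v)"
    by (simp add: vec_eq_iff matrix_vector_mult_def axis_def if_distrib cong: if_cong)
  have "?f (axis v 1) = (\<Sum>u\<in>UNIV. (A $ u $ v)^2)"
    unfolding col by (simp add: inner_vec_def power2_eq_square)
  hence M4: "M > 4" using mx[OF \<open>axis v 1 \<in> _\<close>] big unfolding M_def by simp
  have nx0: "x0 \<bullet> x0 = 1" using x0 by (simp add: dot_square_norm)
  have bound: "?f z \<le> M * (z \<bullet> z)" for z
  proof (cases "z = 0")
    case True then show ?thesis by simp
  next
    case False
    hence nz: "norm z > 0" by simp
    have "(1/norm z) *\<^sub>R z \<in> sphere 0 1" using nz by simp
    from mx[OF this] have "(1/norm z)^2 * ?f z \<le> M"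
      unfolding M_def matrix_vector_mult_scaleR by (simp add: power2_eq_square)
    hence "?f z \<le> M * (norm z)^2" using nz by (simp add: field_simps)
    thus ?thesis by (simp add: dot_square_norm)
  qed
  have key: "(A *v x0) \<bullet> (A *v y) = M * (x0 \<bullet> y)" for y
  proof -
    define b where "b = (A *v x0) \<bullet> (A *v y) - M * (x0 \<bullet> y)"
    define c where "c = (A *v y) \<bullet> (A *v y) - M * (y \<bullet> y)"
    have "c \<le> 0" using bound[of y] unfolding c_def by simp
    moreover have "2*t*b + t^2*c \<le> 0" for t
    proof -
      have "?f (x0 + t *\<^sub>R y) \<le> M * ((x0 + t *\<^sub>R y) \<bullet> (x0 + t *\<^sub>R y))" by (rule bound)
      thus ?thesis unfolding b_def c_def M_def using nx0
        by (simp add: matrix_vector_right_distrib matrix_vector_mult_scaleR inner_add_left inner_add_right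
            inner_commute power2_eq_square algebra_simps)
    qed
    ultimately have "b = 0" by (rule quad_lemma)
    thus ?thesis unfolding b_def by simp
  qed
  have eig2: "A *v (A *v x0) = M *\<^sub>R x0"
  proof -
    have "(A *v (A *v x0) - M *\<^sub>R x0) \<bullet> y = 0" for y
      using key[of y] sym_inner[OF sym, of "A *v x0" y] by (simp add: inner_diff_left)
    from this[of "A *v (A *v x0) - M *\<^sub>R x0"] show ?thesis by simp
  qed
  define m where "m = sqrt M"
  have m2: "m > 2" unfolding m_def using M4 real_less_rsqrt by force
  have mm: "m * m = M" unfolding m_def using M4 by simp
  define w where "w = A *v x0 + m *\<^sub>R x0"
  have Aw: "A *v w = m *\<^sub>R w"
    unfolding w_def using eig2 mm
    by (simp add: matrix_vector_right_distrib matrix_vector_mult_scaleR algebra_simps scaleR_scaleR)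
  show ?thesis
  proof (cases "w = 0")
    case False then show ?thesis using Aw m2 by auto
  next
    case True
    hence "A *v x0 = (-m) *\<^sub>R x0" unfolding w_def by (simp add: eq_neg_iff_add_eq_0)
    moreover have "x0 \<noteq> 0" using x0 by auto
    ultimately show ?thesis using m2 by (intro exI[of _ x0] exI[of _ "-m"]) auto
  qed
qed

theorem lemma2:
  fixes A :: "real^'n^'n" and v :: 'n
  assumes "is_R_matrix A"
    and "transpose A = A"
    and "(\<Sum>u\<in>UNIV. (A $ u $ v)^2) > 4"
  shows "A \<notin> S'_set"
proof
  assume S: "A \<in> S'_set"
  obtain w l where w: "w \<noteq> 0" "A *v w = l *\<^sub>R w" "\<bar>l\<bar> > 2"
    using big_eig[OF assms(2,3)] by blast
  have idG: "id \<in> Gal (L_field A)" unfolding Gal_def by simp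
  define x :: "complex^'n" where "x = (\<chi> i. complex_of_real (w $ i))"
  have "x \<noteq> 0" using w(1) unfolding x_def by (auto simp: vec_eq_iff)
  moreover have "apply_aut id A *v x = complex_of_real l *s x"
  proof -
    have "(A *v w) $ i = l * w $ i" for i using w(2) by (simp add: vec_eq_iff)
    thus ?thesis unfolding x_def apply_aut_def
      by (simp add: vec_eq_iff matrix_vector_mult_def flip: of_real_mult of_real_sum)
  qed
  ultimately have "is_eigenvalue (apply_aut id A) (complex_of_real l)"
    unfolding is_eigenvalue_def by blast
  with S idG have "complex_of_real l \<in> complex_of_real ` {-2..2}"
    unfolding S'_set_def by blast
  thus False using w(3) by auto
qed

end
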